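(* Let $\Gamma$ be a countably infinite group with a strictly decreasing sequence $\{\Gamma_n\}$ of finite-index normal subgroups with trivial intersection, $X=\varprojlim\Gamma/\Gamma_n$ with left translation action and quotient maps $\pi_n:X\to\Gamma/\Gamma_n$, and for $n\ge2$ let $\gamma_n\in\Gamma_{n-1}\setminus\Gamma_n$, $C_n=\pi_n^{-1}(\gamma_n\Gamma_n)$ and $X_+=\bigcup_{n\ge2}C_n$. Let $s_1,s_2,s_3\in\Gamma$ and $x\in X$ with $s_1x\in C_{n_1}$, $s_2x\in C_{n_2}$, $s_3x\in C_{n_3}$ where $n_1<\min(n_2,n_3)$. Then there is no $y\in X$ with $s_1y\notin X_+$, $s_2y\notin X_+$ and $s_3y\in X_+$.
   Context: $X=\varprojlim\Gamma/\Gamma_n$ is the compact group of compatible sequences in $\prod_n\Gamma/\Gamma_n$ containing $\Gamma$ as a subgroup; $\Gamma$ acts by left translation. *)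

theory Defs
  imports "HOL-Algebra.Algebra"
begin

text \<open>The chain of subgroups is indexed by n \<ge> 1 (index 0 is unused).
  A point of the inverse limit X is a sequence x with x n a coset of Gam n
  (n \<ge> 1), compatible with the projections Gam/Gam(n+1) \<rightarrow> Gam/Gam n;
  the unused coordinate 0 is normalised to the whole group.\<close>

definition invlim :: "('a, 'b) monoid_scheme \<Rightarrow> (nat \<Rightarrow> 'a set) \<Rightarrow> (nat \<Rightarrow> 'a set) set" where
  "invlim G Gam = {x. x 0 = carrier G
      \<and> (\<forall>n\<ge>1. x n \<in> RCOSETS G (Gam n))
      \<and> (\<forall>n\<ge>1. \<forall>g\<in>carrier G. x (Suc n) = r_coset G (Gam (Suc n)) g \<longrightarrow> x n = r_coset G (Gam n) g)}"

definition transl :: "('a, 'b) monoid_scheme \<Rightarrow> 'a \<Rightarrow> (nat \<Rightarrow> 'a set) \<Rightarrow> (nat \<Rightarrow> 'a set)" where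
  "transl G s x = (\<lambda>n. l_coset G s (x n))"

text \<open>C_n = pi_n^{-1}(gamma_n Gam_n) (normality: gamma Gam_n = Gam_n gamma).\<close>
definition cyl :: "('a, 'b) monoid_scheme \<Rightarrow> (nat \<Rightarrow> 'a set) \<Rightarrow> (nat \<Rightarrow> 'a) \<Rightarrow> nat \<Rightarrow> (nat \<Rightarrow> 'a set) set" where
  "cyl G Gam gam n = {x \<in> invlim G Gam. x n = l_coset G (gam n) (Gam n)}"

definition Xplus :: "('a, 'b) monoid_scheme \<Rightarrow> (nat \<Rightarrow> 'a set) \<Rightarrow> (nat \<Rightarrow> 'a) \<Rightarrow> (nat \<Rightarrow> 'a set) set" where
  "Xplus G Gam gam = (\<Union>n\<in>{2..}. cyl G Gam gam n)"

end

theory Submission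
  imports Defs
begin

context group
begin

lemma lc_rc:
  assumes "H \<lhd> G" "s \<in> carrier G" "t \<in> carrier G"
  shows "s <# (H #> t) = H #> (s \<otimes> t)"
proof -
  have sub: "H \<subseteq> carrier G" using assms(1) normal_imp_subgroup subgroup.subset by blast
  have "s <# (H #> t) = (s <# H) #> t" using coset_assoc assms sub by blast
  also have "s <# H = H #> s" using normal.coset_eq[OF assms(1)] assms(2) by blast
  also have "(H #> s) #> t = H #> (s \<otimes> t)" using coset_mult_assoc sub assms by blast
  finally show ?thesis .
qed

lemma rc_eq:
  assumes "subgroup H G" "a \<in> carrier G" "b \<in> carrier G"
  shows "(H #> a = H #> b) = (a \<otimes> inv b \<in> H)"
proof
  assume "H #> a = H #> b"
  then have "a \<in> H #> b" using rcos_self assms by metis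
  then show "a \<otimes> inv b \<in> H" using subgroup.rcos_module_imp[OF assms(1) is_group assms(3)] by blast
next
  assume "a \<otimes> inv b \<in> H"
  then have "a \<in> H #> b" using subgroup.rcos_module_rev[OF assms(1) is_group assms(3) assms(2)] by blast
  then show "H #> a = H #> b" using repr_independence assms by metis
qed

lemma cancel_mid: "a \<in> carrier G \<Longrightarrow> b \<in> carrier G \<Longrightarrow> a \<otimes> (inv a \<otimes> b) = b"
  by (simp add: m_assoc[symmetric])

lemma cancel_mid2: "a \<in> carrier G \<Longrightarrow> b \<in> carrier G \<Longrightarrow> inv a \<otimes> (a \<otimes> b) = b"
  by (simp add: m_assoc[symmetric])

end

locale chainG = group G for G (structure) +
  fixes Gam :: "nat \<Rightarrow> 'a set"
  assumes nrm: "\<forall>n\<ge>1. Gam n \<lhd> G"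
    and dec: "\<forall>n\<ge>1. Gam (Suc n) \<subset> Gam n"
begin

lemma sub: "n \<ge> 1 \<Longrightarrow> subgroup (Gam n) G"
  using nrm normal_imp_subgroup by blast

lemma subc: "n \<ge> 1 \<Longrightarrow> Gam n \<subseteq> carrier G"
  using sub subgroup.subset by blast

lemma mono_gam:
  assumes "1 \<le> n" "n \<le> k"
  shows "Gam k \<subseteq> Gam n"
  using assms(2)
proof (induction k rule: dec_induct)
  case base
  then show ?case by simp
next
  case (step k)
  then show ?case using dec assms(1) by (metis order_trans psubset_imp_subset)
qed

lemma down:
  assumes "y \<in> invlim G Gam" "1 \<le> k" "k \<le> n" "g \<in> carrier G"
  shows "y n = Gam n #> g \<Longrightarrow> y k = Gam k #> g"
  using assms(3)
proof (induction n rule: dec_induct)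
  case base
  then show ?case by simp
next
  case (step n)
  have c: "\<forall>n\<ge>1. \<forall>g\<in>carrier G. y (Suc n) = Gam (Suc n) #> g \<longrightarrow> y n = Gam n #> g"
    using assms(1) unfolding invlim_def by blast
  have n1: "n \<ge> 1" using step(1) assms(2) by simp
  have "y n = Gam n #> g" using c n1 assms(4) step(4) by blast
  then show ?case using step(3) by blast
qed

lemma rep:
  assumes "y \<in> invlim G Gam" "n \<ge> 1"
  obtains t where "t \<in> carrier G" "y n = Gam n #> t"
proof -
  have "y n \<in> rcosets (Gam n)" using assms unfolding invlim_def by blast
  then show ?thesis using that unfolding RCOSETS_def by blast
qed

lemma transl_inv:
  assumes y: "y \<in> invlim G Gam" and s: "s \<in> carrier G"
  shows "transl G s y \<in> invlim G Gam"
proof -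
  have y0: "y 0 = carrier G" using y unfolding invlim_def by blast
  have yc: "\<forall>n\<ge>1. \<forall>g\<in>carrier G. y (Suc n) = Gam (Suc n) #> g \<longrightarrow> y n = Gam n #> g"
    using y unfolding invlim_def by blast
  have "s <# carrier G = carrier G"
    using coset_join3[OF s subgroup_self] s by blast
  then have 0: "transl G s y 0 = carrier G" using y0 unfolding transl_def by simp
  have 1: "transl G s y n \<in> rcosets (Gam n)" if n1: "n \<ge> 1" for n
  proof -
    obtain t where t: "t \<in> carrier G" "y n = Gam n #> t" using rep[OF y n1] by blast
    have nn: "Gam n \<lhd> G" using nrm n1 by simp
    have "transl G s y n = Gam n #> (s \<otimes> t)"
      unfolding transl_def using t(2) lc_rc[OF nn s t(1)] by simp
    then show ?thesis using rcosetsI[OF subc[OF n1] m_closed[OF s t(1)]] by simp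
  qed
  have 2: "transl G s y n = Gam n #> g"
    if "n \<ge> 1" "g \<in> carrier G" "transl G s y (Suc n) = Gam (Suc n) #> g" for n g
  proof -
    have sn: "Suc n \<ge> 1" by simp
    obtain t where t: "t \<in> carrier G" "y (Suc n) = Gam (Suc n) #> t" using rep[OF y sn] by blast
    have yn: "y n = Gam n #> t" using yc that(1) t by blast
    have nn: "Gam n \<lhd> G" using nrm that by simp
    have nsn: "Gam (Suc n) \<lhd> G" using nrm by simp
    have "Gam (Suc n) #> (s \<otimes> t) = Gam (Suc n) #> g"
      using that(3) unfolding transl_def using t(2) lc_rc[OF nsn s t(1)] by simp
    then have "(s \<otimes> t) \<otimes> inv g \<in> Gam (Suc n)"
      using rc_eq[OF sub[OF sn] m_closed[OF s t(1)] that(2)] by simp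
    moreover have "Gam (Suc n) \<subseteq> Gam n" using mono_gam[OF that(1)] by simp
    ultimately have "(s \<otimes> t) \<otimes> inv g \<in> Gam n" by blast
    then have "Gam n #> (s \<otimes> t) = Gam n #> g"
      using rc_eq[OF sub[OF that(1)] m_closed[OF s t(1)] that(2)] by simp
    then show ?thesis unfolding transl_def using yn lc_rc[OF nn s t(1)] by simp
  qed
  show ?thesis unfolding invlim_def using 0 1 2 by blast
qed

end

lemma (in chainG) main_aux:
  fixes gam :: "nat \<Rightarrow> 'a"
    and s1 s2 s3 :: 'a and x :: "nat \<Rightarrow> 'a set" and n1 n2 n3 :: nat
  assumes "group G"
    and "countable (carrier G)" and "infinite (carrier G)"
    and "\<forall>n\<ge>1. normal (Gam n) G"
    and "\<forall>n\<ge>1. finite (RCOSETS G (Gam n))"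
    and "\<forall>n\<ge>1. Gam (Suc n) \<subset> Gam n"
    and "(\<Inter>n\<in>{1..}. Gam n) = {\<one>\<^bsub>G\<^esub>}"
    and "\<forall>n\<ge>2. gam n \<in> Gam (n - 1) - Gam n"
    and "s1 \<in> carrier G" and "s2 \<in> carrier G" and "s3 \<in> carrier G"
    and "x \<in> invlim G Gam"
    and "n1 \<ge> 2" and "n2 \<ge> 2" and "n3 \<ge> 2"
    and "transl G s1 x \<in> cyl G Gam gam n1"
    and "transl G s2 x \<in> cyl G Gam gam n2"
    and "transl G s3 x \<in> cyl G Gam gam n3"
    and "n1 < min n2 n3"
  shows "\<not> (\<exists>y\<in>invlim G Gam. transl G s1 y \<notin> Xplus G Gam gam
              \<and> transl G s2 y \<notin> Xplus G Gam gam \<and> transl G s3 y \<in> Xplus G Gam gam)"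
proof
  let ?H = "Gam"
  let ?N = n1
  have gamc: "gam m \<in> carrier G" if "m \<ge> 2" for m
  proof -
    have "gam m \<in> Gam (m - 1)" using assms(8) that by auto
    moreover have "Gam (m - 1) \<subseteq> carrier G" using subc[of "m - 1"] that by auto
    ultimately show ?thesis by auto
  qed
  have cyl_at: "z m = Gam m #> gam m" if "z \<in> cyl G Gam gam m" "m \<ge> 2" for z m
  proof -
    have "gam m <# Gam m = Gam m #> gam m"
      using normal.coset_eq[of "Gam m" G] nrm gamc that by auto
    then show ?thesis using that unfolding cyl_def by auto
  qed
  have cyl_low: "z k = Gam k" if "z \<in> cyl G Gam gam m" "m \<ge> 2" "1 \<le> k" "k < m" for z m k
  proof -
    have zi: "z \<in> invlim G Gam" using that unfolding cyl_def by auto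
    have km: "k \<le> m" using that by simp
    have zk: "z k = Gam k #> gam m"
      using down[OF zi that(3) km gamc[OF that(2)] cyl_at[OF that(1,2)]] .
    have g1: "gam m \<in> Gam (m - 1)" using assms(8) that(2) by blast
    have "Gam (m - 1) \<subseteq> Gam k" using mono_gam[of k "m - 1"] that by simp
    then have "gam m \<in> Gam k" using g1 by blast
    then show ?thesis using zk coset_join2[OF gamc[OF that(2)] sub[OF that(3)]] by simp
  qed
  have N1: "?N \<ge> 1" using assms(13) by simp
  obtain u where u: "u \<in> carrier G" "x ?N = Gam ?N #> u" using rep assms(12) N1 by blast
  have tx: "transl G s x ?N = Gam ?N #> (s \<otimes> u)" if "s \<in> carrier G" for s
    unfolding transl_def using u(2) lc_rc[OF _ that u(1)] nrm N1 by simp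
  have in_of: "a \<in> Gam n" if "Gam n #> a = Gam n" "a \<in> carrier G" "n \<ge> 1" for a n
    using rcos_self[OF that(2) sub[OF that(3)]] that(1) by simp
  have n12: "n1 < n2" "n1 < n3" using assms(19) by simp_all
  have u2: "s2 \<otimes> u \<in> Gam ?N"
    using in_of[OF _ m_closed[OF assms(10) u(1)] N1] tx[OF assms(10)]
      cyl_low[OF assms(17) assms(14) N1 n12(1)] by simp
  have u3: "s3 \<otimes> u \<in> Gam ?N"
    using in_of[OF _ m_closed[OF assms(11) u(1)] N1] tx[OF assms(11)]
      cyl_low[OF assms(18) assms(15) N1 n12(2)] by simp
  have u1: "Gam ?N #> (s1 \<otimes> u) = Gam ?N #> gam ?N"
    using tx[OF assms(9)] cyl_at[OF assms(16) assms(13)] by simp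
  assume "\<exists>y\<in>invlim G Gam. transl G s1 y \<notin> Xplus G Gam gam
              \<and> transl G s2 y \<notin> Xplus G Gam gam \<and> transl G s3 y \<in> Xplus G Gam gam"
  then obtain y where y: "y \<in> invlim G Gam" "transl G s1 y \<notin> Xplus G Gam gam"
     "transl G s2 y \<notin> Xplus G Gam gam" "transl G s3 y \<in> Xplus G Gam gam" by blast
  then obtain m where m: "m \<ge> 2" "transl G s3 y \<in> cyl G Gam gam m"
    unfolding Xplus_def by auto
  have ty: "transl G s y n = Gam n #> (s \<otimes> t)" if "s \<in> carrier G" "t \<in> carrier G" "y n = Gam n #> t" "n \<ge> 1" for s t n
    unfolding transl_def using lc_rc[OF _ that(1,2)] nrm that(3,4) by simp
  have ceq: "gam n <# Gam n = Gam n #> gam n" if "n \<ge> 2" for n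
    using normal.coset_eq[of "Gam n" G] nrm gamc[OF that] that by simp
  show False
  proof (cases "m \<le> ?N")
    case True
    have m1: "m \<ge> 1" using m(1) by simp
    obtain t where t: "t \<in> carrier G" "y m = Gam m #> t" using rep[OF y(1) m1] by blast
    have e3: "Gam m #> (s3 \<otimes> t) = Gam m #> gam m"
      using cyl_at[OF m(2) m(1)] ty[OF assms(11) t m1] by simp
    have "(s2 \<otimes> t) \<otimes> inv (s3 \<otimes> t) = (s2 \<otimes> u) \<otimes> inv (s3 \<otimes> u)"
      using t u assms(10,11) by (simp add: m_assoc inv_mult_group cancel_mid cancel_mid2)
    moreover have "(s2 \<otimes> u) \<otimes> inv (s3 \<otimes> u) \<in> Gam ?N"
      using u2 u3 sub[OF N1] by (simp add: subgroup.m_closed subgroup.m_inv_closed)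
    moreover have "Gam ?N \<subseteq> Gam m" using mono_gam[OF m1 True] .
    ultimately have "(s2 \<otimes> t) \<otimes> inv (s3 \<otimes> t) \<in> Gam m" by auto
    then have "Gam m #> (s2 \<otimes> t) = Gam m #> (s3 \<otimes> t)"
      using rc_eq[OF sub[OF m1] m_closed[OF assms(10) t(1)] m_closed[OF assms(11) t(1)]] by simp
    then have "transl G s2 y m = gam m <# Gam m"
      using e3 ty[OF assms(10) t m1] ceq[OF m(1)] by simp
    then have "transl G s2 y \<in> cyl G Gam gam m"
      unfolding cyl_def using transl_inv[OF y(1) assms(10)] by simp
    then show False using y(3) m(1) unfolding Xplus_def by auto
  next
    case False
    obtain t where t: "t \<in> carrier G" "y ?N = Gam ?N #> t" using rep[OF y(1) N1] by blast
    have lt: "?N < m" using False by simp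
    have "Gam ?N #> (s3 \<otimes> t) = Gam ?N"
      using cyl_low[OF m(2) m(1) N1 lt] ty[OF assms(11) t N1] by simp
    then have t3: "s3 \<otimes> t \<in> Gam ?N" using in_of[OF _ m_closed[OF assms(11) t(1)] N1] by simp
    define h where "h = inv (s3 \<otimes> u) \<otimes> (s3 \<otimes> t)"
    have hH: "h \<in> Gam ?N" unfolding h_def
      using u3 t3 sub[OF N1] by (simp add: subgroup.m_closed subgroup.m_inv_closed)
    have hc: "h \<in> carrier G" using hH subc[OF N1] by auto
    have gc: "gam ?N \<in> carrier G" using gamc[OF assms(13)] .
    have s1u: "s1 \<otimes> u \<in> carrier G" using assms(9) u(1) by simp
    have "s1 \<otimes> t = (s1 \<otimes> u) \<otimes> h"
      unfolding h_def using t u assms(9,11) by (simp add: m_assoc inv_mult_group cancel_mid cancel_mid2)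
    then have "Gam ?N #> (s1 \<otimes> t) = (Gam ?N #> (s1 \<otimes> u)) #> h"
      using coset_mult_assoc[OF subc[OF N1] s1u hc] by simp
    also have "\<dots> = Gam ?N #> (gam ?N \<otimes> h)"
      using u1 coset_mult_assoc[OF subc[OF N1] gc hc] by simp
    also have "\<dots> = Gam ?N #> gam ?N"
    proof -
      have nN: "Gam ?N \<lhd> G" using nrm N1 by simp
      have "gam ?N \<otimes> h \<otimes> inv (gam ?N) \<in> Gam ?N"
        using normal.inv_op_closed2[OF nN gc hH] .
      then show ?thesis using rc_eq[OF sub[OF N1] m_closed[OF gc hc] gc] by simp
    qed
    finally have "transl G s1 y ?N = gam ?N <# Gam ?N"
      using ty[OF assms(9) t N1] ceq[OF assms(13)] by simp
    then have "transl G s1 y \<in> cyl G Gam gam ?N"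
      unfolding cyl_def using transl_inv[OF y(1) assms(9)] by simp
    then show False using y(2) assms(13) unfolding Xplus_def by auto
  qed
qed


theorem lemma4p6:
  fixes G :: "('a, 'b) monoid_scheme" and Gam :: "nat \<Rightarrow> 'a set" and gam :: "nat \<Rightarrow> 'a"
    and s1 s2 s3 :: 'a and x :: "nat \<Rightarrow> 'a set" and n1 n2 n3 :: nat
  assumes "group G"
    and "countable (carrier G)" and "infinite (carrier G)"
    and "\<forall>n\<ge>1. normal (Gam n) G"
    and "\<forall>n\<ge>1. finite (RCOSETS G (Gam n))"
    and "\<forall>n\<ge>1. Gam (Suc n) \<subset> Gam n"
    and "(\<Inter>n\<in>{1..}. Gam n) = {\<one>\<^bsub>G\<^esub>}"
    and "\<forall>n\<ge>2. gam n \<in> Gam (n - 1) - Gam n"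
    and "s1 \<in> carrier G" and "s2 \<in> carrier G" and "s3 \<in> carrier G"
    and "x \<in> invlim G Gam"
    and "n1 \<ge> 2" and "n2 \<ge> 2" and "n3 \<ge> 2"
    and "transl G s1 x \<in> cyl G Gam gam n1"
    and "transl G s2 x \<in> cyl G Gam gam n2"
    and "transl G s3 x \<in> cyl G Gam gam n3"
    and "n1 < min n2 n3"
  shows "\<not> (\<exists>y\<in>invlim G Gam. transl G s1 y \<notin> Xplus G Gam gam
              \<and> transl G s2 y \<notin> Xplus G Gam gam \<and> transl G s3 y \<in> Xplus G Gam gam)"
proof -
  interpret chainG G Gam using assms(1,4,6) by (simp add: chainG_def chainG_axioms_def)
  show ?thesis by (rule main_aux[OF assms])
qed

end
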